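(* Let $\rho>0$. Then the kernel $\mathcal{N}$ belongs to $L^2\big((-\infty,0]\times(-\infty,0],\ |\theta(y)|\,|\theta(s)|\,dy\,ds\big)$; consequently the integral operator $K\psi(y)=\int_{-\infty}^0\mathcal{N}(y,s)\psi(s)\,ds$ is a Hilbert–Schmidt operator on $L^2((-\infty,0],|\theta(y)|\,dy)$.
   Context: The function $\theta$ on $(-\infty,0]$ is $\theta(y)=y$ for $y\in[-1,0]$ and $\theta(y)=-1$ for $y<-1$. For $\rho>0$ and $y,s<0$ the kernel is $$\mathcal{N}(y,s)=e^{-\rho y}\,\frac{\theta(y)}{y}\,\frac{s}{\theta(s)}\,e^{\frac{s^2}{2}}\int_{-\infty}^{\min(y,s)}\frac{e^{-\frac12(u-\rho)^2}}{u}\,du .$$ *)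

theory Defs
  imports "HOL-Analysis.Analysis"
begin

definition theta :: "real \<Rightarrow> real" where
  "theta y = (if y < -1 then -1 else y)"

definition kernelN :: "real \<Rightarrow> real \<Rightarrow> real \<Rightarrow> real" where
  "kernelN \<rho> y s =
     exp (- \<rho> * y) * (theta y / y) * (s / theta s) * exp (s\<^sup>2 / 2) *
     (LBINT u:{..min y s}. exp (- ((u - \<rho>)\<^sup>2) / 2) / u)"

end

theory Submission
  imports Defs "HOL-Real_Asymp.Real_Asymp"
begin

lemma FTC_nn:
  fixes f F :: "real \<Rightarrow> real" and a b :: ereal
  assumes ab: "a < b"
  assumes F: "\<And>x. a < ereal x \<Longrightarrow> ereal x < b \<Longrightarrow> DERIV F x :> f x"
  assumes f: "\<And>x. a < ereal x \<Longrightarrow> ereal x < b \<Longrightarrow> isCont f x"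
  assumes nn: "\<And>x. a < ereal x \<Longrightarrow> ereal x < b \<Longrightarrow> 0 \<le> f x"
  assumes A: "((F \<circ> real_of_ereal) \<longlongrightarrow> A) (at_right a)"
  assumes B: "((F \<circ> real_of_ereal) \<longlongrightarrow> B) (at_left b)"
  shows "set_integrable lborel (einterval a b) f"
    "(\<integral>\<^sup>+x. indicator (einterval a b) x * ennreal (f x) \<partial>lborel) = ennreal (B - A)"
proof -
  have nnAE: "AE x in lborel. a < ereal x \<longrightarrow> ereal x < b \<longrightarrow> 0 \<le> f x" using nn by auto
  note R = interval_integral_FTC_nonneg[OF ab F f nnAE A B]
  show si: "set_integrable lborel (einterval a b) f" by (rule R(1))
  have "(\<integral>\<^sup>+x. indicator (einterval a b) x * ennreal (f x) \<partial>lborel)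
      = (\<integral>\<^sup>+x. ennreal (indicator (einterval a b) x * f x) \<partial>lborel)"
    by (intro nn_integral_cong) (auto split: split_indicator)
  also have "\<dots> = ennreal (\<integral>x. indicator (einterval a b) x * f x \<partial>lborel)"
    apply (rule nn_integral_eq_integral)
    using si apply (simp add: set_integrable_def)
    using nn by (auto split: split_indicator simp: einterval_iff)
  also have "(\<integral>x. indicator (einterval a b) x * f x \<partial>lborel) = (LBINT x=a..b. f x)"
    using ab by (simp add: interval_lebesgue_integral_def set_lebesgue_integral_def)
  finally show "(\<integral>\<^sup>+x. indicator (einterval a b) x * ennreal (f x) \<partial>lborel) = ennreal (B - A)"
    using R(2) by simp
qed

lemma cont_left: "isCont F x \<Longrightarrow> (F \<longlongrightarrow> F x) (at_left x)"
  by (rule tendsto_within_subset[OF isContD]) auto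
lemma cont_right: "isCont F x \<Longrightarrow> (F \<longlongrightarrow> F x) (at_right x)"
  by (rule tendsto_within_subset[OF isContD]) auto

lemma intA:
  fixes \<rho> :: real assumes r: "\<rho> > 0"
  shows "(\<integral>\<^sup>+x. indicator {..<0} x * ennreal (1/(\<rho>-x)^2) \<partial>lborel) = ennreal (1/\<rho>)"
proof -
  have "(\<integral>\<^sup>+x. indicator (einterval (-\<infinity>) (ereal 0)) x * ennreal (1/(\<rho>-x)^2) \<partial>lborel) = ennreal (1/\<rho> - 0)"
  proof (rule FTC_nn[where F="\<lambda>x. 1/(\<rho>-x)"])
    fix x assume "- \<infinity> < ereal x" "ereal x < ereal 0"
    then have x: "x < 0" by simp
    show "DERIV (\<lambda>x. 1/(\<rho>-x)) x :> 1/(\<rho>-x)^2"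
      using x r by (auto intro!: derivative_eq_intros simp: power2_eq_square field_simps)
    show "isCont (\<lambda>x. 1/(\<rho>-x)^2) x" using x r by (auto intro!: continuous_intros)
    show "0 \<le> 1/(\<rho>-x)^2" by simp
  next
    show "(((\<lambda>x. 1/(\<rho>-x)) \<circ> real_of_ereal) \<longlongrightarrow> 0) (at_right (- \<infinity>))"
      unfolding ereal_tendsto_simps by real_asymp
    show "(((\<lambda>x. 1/(\<rho>-x)) \<circ> real_of_ereal) \<longlongrightarrow> 1/\<rho>) (at_left (ereal 0))"
      unfolding ereal_tendsto_simps using r
      using r by (auto intro!: tendsto_eq_intros)
  qed simp
  then show ?thesis by simp
qed

lemma intB:
  fixes \<rho> s :: real assumes r: "\<rho> > 0" and s: "s < 0"
  shows "(\<integral>\<^sup>+y. indicator {s<..<0} y * ennreal (exp (2*\<rho>*(s-y))) \<partial>lborel) = ennreal ((1 - exp (2*\<rho>* s)) / (2*\<rho>))"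
proof -
  have "(\<integral>\<^sup>+y. indicator (einterval (ereal s) (ereal 0)) y * ennreal (exp (2*\<rho>*(s-y))) \<partial>lborel)
     = ennreal ((- exp (2*\<rho>*(s-0)) / (2*\<rho>)) - (- exp (2*\<rho>*(s-s)) / (2*\<rho>)))"
  proof (rule FTC_nn[where F="\<lambda>y. - exp (2*\<rho>*(s-y))/(2*\<rho>)"])
    fix x
    show "DERIV (\<lambda>y. - exp (2*\<rho>*(s-y)) / (2*\<rho>)) x :> exp (2*\<rho>*(s-x))"
      using r by (auto intro!: derivative_eq_intros simp: field_simps)
    show "isCont (\<lambda>y. exp (2*\<rho>*(s-y))) x" by (auto intro!: continuous_intros)
    show "0 \<le> exp (2*\<rho>*(s-x))" by simp
  next
    show "(((\<lambda>y. - exp (2*\<rho>*(s-y)) / (2*\<rho>)) \<circ> real_of_ereal) \<longlongrightarrow> - exp (2*\<rho>*(s-s)) / (2*\<rho>)) (at_right (ereal s))"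
      unfolding ereal_tendsto_simps
      by (rule cont_right[where F="\<lambda>y. - exp (2*\<rho>*(s-y)) / (2*\<rho>)"]) (use r in \<open>auto intro!: continuous_intros\<close>)
    show "(((\<lambda>y. - exp (2*\<rho>*(s-y)) / (2*\<rho>)) \<circ> real_of_ereal) \<longlongrightarrow> - exp (2*\<rho>*(s-0)) / (2*\<rho>)) (at_left (ereal 0))"
      unfolding ereal_tendsto_simps
      by (rule cont_left[where F="\<lambda>y. - exp (2*\<rho>*(s-y)) / (2*\<rho>)"]) (use r in \<open>auto intro!: continuous_intros\<close>)
  qed (use s in simp)
  moreover have "(- exp (2*\<rho>*(s-0)) / (2*\<rho>)) - (- exp (2*\<rho>*(s-s)) / (2*\<rho>)) = (1 - exp (2*\<rho>* s)) / (2*\<rho>)"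
    by (simp add: diff_divide_distrib)
  ultimately show ?thesis by (simp only: einterval_eq)
qed

lemma intC:
  fixes y :: real assumes y: "y < 0"
  shows "(\<integral>\<^sup>+s. indicator {y<..<0} s * ennreal (exp (y * (s - y))) \<partial>lborel) = ennreal ((exp (y * (0 - y)) - exp (y * (y - y))) / y)"
proof -
  have "(\<integral>\<^sup>+s. indicator (einterval (ereal y) (ereal 0)) s * ennreal (exp (y * (s - y))) \<partial>lborel)
     = ennreal (exp (y * (0 - y)) / y - exp (y * (y - y)) / y)"
  proof (rule FTC_nn[where F="\<lambda>s. exp (y * (s - y)) / y"])
    fix x
    show "DERIV (\<lambda>s. exp (y * (s - y)) / y) x :> exp (y * (x - y))"
      using y by (auto intro!: derivative_eq_intros simp: field_simps)
    show "isCont (\<lambda>s. exp (y * (s - y))) x" by (auto intro!: continuous_intros)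
    show "0 \<le> exp (y * (x - y))" by simp
  next
    show "(((\<lambda>s. exp (y * (s - y)) / y) \<circ> real_of_ereal) \<longlongrightarrow> exp (y * (y - y)) / y) (at_right (ereal y))"
      unfolding ereal_tendsto_simps
      by (rule cont_right[where F="\<lambda>s. exp (y * (s - y)) / y"]) (use y in \<open>auto intro!: continuous_intros\<close>)
    show "(((\<lambda>s. exp (y * (s - y)) / y) \<circ> real_of_ereal) \<longlongrightarrow> exp (y * (0 - y)) / y) (at_left (ereal 0))"
      unfolding ereal_tendsto_simps
      by (rule cont_left[where F="\<lambda>s. exp (y * (s - y)) / y"]) (use y in \<open>auto intro!: continuous_intros\<close>)
  qed (use y in simp)
  moreover have "exp (y * (0 - y)) / y - exp (y * (y - y)) / y = (exp (y * (0 - y)) - exp (y * (y - y))) / y"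
    by (simp add: diff_divide_distrib)
  ultimately show ?thesis by (simp only: einterval_eq)
qed

lemma intC_le:
  fixes y :: real assumes y: "y < 0"
  shows "(exp (y * (0 - y)) - exp (y * (y - y))) / y \<le> 1"
proof -
  have e1: "exp (y * (0 - y)) = exp (- (y^2))" by (simp add: power2_eq_square)
  have e: "(exp (y * (0 - y)) - exp (y * (y - y))) / y = (1 - exp (- (y^2))) / (-y)"
    unfolding e1 by (simp add: divide_minus_right) (metis minus_diff_eq minus_divide_left)
  have key: "1 - exp (- (y^2)) \<le> -y"
  proof (cases "y \<ge> -1")
    case True
    have "1 - exp (- (y^2)) \<le> y^2" using exp_ge_add_one_self[of "- (y^2)"] by simp
    also have "y^2 = (-y) * (-y)" by (simp add: power2_eq_square)
    also have "(-y) * (-y) \<le> (-y) * 1" by (rule mult_left_mono) (use True y in auto)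
    finally show ?thesis by simp
  next
    case False
    have "1 - exp (- (y^2)) \<le> 1" by simp
    also have "1 \<le> -y" using False by simp
    finally show ?thesis .
  qed
  show ?thesis unfolding e by (rule divide_le_eq_1_pos[THEN iffD2]) (use key y in auto)
qed

lemma intD:
  fixes \<rho> m :: real assumes r: "\<rho> > 0" and m: "m < 0"
  shows "set_integrable lborel {..<m} (\<lambda>u. (\<rho> - u) * exp (- ((u - \<rho>)^2) / 2))"
    "(\<integral>u. indicator {..<m} u * ((\<rho> - u) * exp (- ((u - \<rho>)^2) / 2)) \<partial>lborel) = exp (- ((m - \<rho>)^2) / 2)"
proof -
  let ?F = "\<lambda>u. exp (- ((u - \<rho>)^2) / 2)"
  have AE: "AE x in lborel. - \<infinity> < ereal x \<longrightarrow> ereal x < ereal m \<longrightarrow> 0 \<le> (\<rho> - x) * exp (- ((x - \<rho>)^2) / 2)"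
    using r m by (intro AE_I2) auto
  note R = interval_integral_FTC_nonneg[where F="?F" and a="-\<infinity>" and b="ereal m" and A=0 and B="?F m", OF _ _ _ AE]
  have d: "DERIV ?F x :> (\<rho> - x) * exp (- ((x - \<rho>)^2) / 2)" for x
    by (auto intro!: derivative_eq_intros simp: field_simps power2_eq_square)
  have c: "isCont (\<lambda>x. (\<rho> - x) * exp (- ((x - \<rho>)^2) / 2)) x" for x
    by (auto intro!: continuous_intros)
  have A: "((?F \<circ> real_of_ereal) \<longlongrightarrow> 0) (at_right (- \<infinity>))"
    unfolding ereal_tendsto_simps by real_asymp
  have B: "((?F \<circ> real_of_ereal) \<longlongrightarrow> ?F m) (at_left (ereal m))"
    unfolding ereal_tendsto_simps by (rule cont_left) (auto intro!: continuous_intros)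
  note R2 = R[OF _ d c A B]
  show "set_integrable lborel {..<m} (\<lambda>u. (\<rho> - u) * exp (- ((u - \<rho>)^2) / 2))"
    using R2(1) by simp
  show "(\<integral>u. indicator {..<m} u * ((\<rho> - u) * exp (- ((u - \<rho>)^2) / 2)) \<partial>lborel) = exp (- ((m - \<rho>)^2) / 2)"
    using R2(2) by (simp add: interval_lebesgue_integral_def set_lebesgue_integral_def)
qed

lemma Ibound:
  fixes \<rho> m :: real assumes r: "\<rho> > 0" and m: "m < 0"
  shows "set_integrable lborel {..m} (\<lambda>u. exp (- ((u - \<rho>)\<^sup>2) / 2) / u)"
    "\<bar>LBINT u:{..m}. exp (- ((u - \<rho>)\<^sup>2) / 2) / u\<bar> \<le> exp (- ((m - \<rho>)\<^sup>2) / 2) / ((-m) * (\<rho> - m))"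
proof -
  define f where "f = (\<lambda>u::real. exp (- ((u - \<rho>)\<^sup>2) / 2) / u)"
  define g where "g = (\<lambda>u::real. (\<rho> - u) * exp (- ((u - \<rho>)^2) / 2))"
  define c where "c = (-m) * (\<rho> - m)"
  have c: "c > 0" using r m by (simp add: c_def mult_neg_pos)
  have gi: "integrable lborel (\<lambda>u. indicator {..<m} u * g u)"
    using intD(1)[OF r m] by (simp add: set_integrable_def g_def)
  have gv: "(\<integral>u. indicator {..<m} u * g u \<partial>lborel) = exp (- ((m - \<rho>)^2) / 2)"
    using intD(2)[OF r m] by (simp add: g_def)
  have gi2: "integrable lborel (\<lambda>u. indicator {..<m} u * g u / c)"
    using gi by (rule integrable_divide)
  have AEind: "AE u in lborel. indicator {..m} u = (indicator {..<m} u :: real)"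
    using AE_lborel_singleton[of m] by eventually_elim (auto split: split_indicator)
  have pw: "\<bar>f u\<bar> \<le> g u / c" if u: "u < m" for u
  proof -
    have e: "exp (- ((u - \<rho>)\<^sup>2) / 2) > 0" by simp
    have "\<bar>f u\<bar> = exp (- ((u - \<rho>)\<^sup>2) / 2) * (1 / (-u))"
      using u m by (simp add: f_def abs_div abs_minus_commute)
    also have "1 / (-u) \<le> (\<rho> - u) / c"
    proof -
      have "1 / (-u) \<le> 1 / (-m)" by (rule frac_le) (use u m in auto)
      also have "1 / (-m) = (\<rho> - m) / c" using r m by (simp add: c_def)
      also have "(\<rho> - m) / c \<le> (\<rho> - u) / c" using u c by (simp add: divide_right_mono)
      finally show ?thesis .
    qed
    then have "exp (- ((u - \<rho>)\<^sup>2) / 2) * (1 / (-u)) \<le> exp (- ((u - \<rho>)\<^sup>2) / 2) * ((\<rho> - u) / c)"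
      using e by (intro mult_left_mono) auto
    also have "\<dots> = g u / c" by (simp add: g_def)
    finally show ?thesis .
  qed
  have fm: "(\<lambda>u. indicator {..m} u * f u) \<in> borel_measurable lborel"
    unfolding f_def by measurable
  have AEb: "AE u in lborel. norm (indicator {..m} u * f u) \<le> indicator {..<m} u * g u / c"
    using AEind
  proof eventually_elim
    case (elim u)
    show ?case
    proof (cases "u < m")
      case True then show ?thesis using pw[OF True] by (simp add: abs_mult)
    next
      case False then show ?thesis using elim by (auto split: split_indicator)
    qed
  qed
  have fi: "integrable lborel (\<lambda>u. indicator {..m} u * f u)"
    by (rule Bochner_Integration.integrable_bound[OF gi2 fm]) (use AEb in \<open>eventually_elim, metis abs_ge_self order_trans real_norm_def\<close>)
  show "set_integrable lborel {..m} (\<lambda>u. exp (- ((u - \<rho>)\<^sup>2) / 2) / u)"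
    using fi by (simp add: set_integrable_def f_def)
  have "\<bar>LBINT u:{..m}. exp (- ((u - \<rho>)\<^sup>2) / 2) / u\<bar> = norm (\<integral>u. indicator {..m} u * f u \<partial>lborel)"
    by (simp add: set_lebesgue_integral_def f_def)
  also have "\<dots> \<le> (\<integral>u. norm (indicator {..m} u * f u) \<partial>lborel)"
    by (rule integral_norm_bound)
  also have "\<dots> \<le> (\<integral>u. indicator {..<m} u * g u / c \<partial>lborel)"
    by (rule integral_mono_AE) (use fi gi2 AEb in auto)
  also have "\<dots> = exp (- ((m - \<rho>)^2) / 2) / c"
    using gv by simp
  finally show "\<bar>LBINT u:{..m}. exp (- ((u - \<rho>)\<^sup>2) / 2) / u\<bar> \<le> exp (- ((m - \<rho>)\<^sup>2) / 2) / ((-m) * (\<rho> - m))"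
    by (simp add: c_def)
qed

definition G1 :: "real \<Rightarrow> real \<times> real \<Rightarrow> real" where
  "G1 \<rho> p = (if snd p \<le> fst p \<and> fst p < 0 then exp (2*\<rho>*(snd p - fst p)) / (\<rho> - snd p)^2 else 0)"

definition G2 :: "real \<Rightarrow> real \<times> real \<Rightarrow> real" where
  "G2 \<rho> p = (if fst p < snd p \<and> snd p < 0 then exp (fst p * (snd p - fst p)) / (\<rho> - fst p)^2 else 0)"

lemma G1_meas[measurable]: "G1 \<rho> \<in> borel_measurable (lborel \<Otimes>\<^sub>M lborel)"
  unfolding G1_def by measurable

lemma G2_meas[measurable]: "G2 \<rho> \<in> borel_measurable (lborel \<Otimes>\<^sub>M lborel)"
  unfolding G2_def by measurable

lemma G1_nn: "\<rho> > 0 \<Longrightarrow> G1 \<rho> p \<ge> 0" by (simp add: G1_def)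
lemma G2_nn: "\<rho> > 0 \<Longrightarrow> G2 \<rho> p \<ge> 0" by (simp add: G2_def)

lemma G1_inner:
  assumes r: "\<rho> > 0"
  shows "(\<integral>\<^sup>+ y. ennreal (G1 \<rho> (y, s)) \<partial>lborel) \<le> ennreal (1 / (2*\<rho>)) * (indicator {..<0} s * ennreal (1/(\<rho>-s)^2))"
proof (cases "s < 0")
  case False
  then have "\<And>y. G1 \<rho> (y, s) = 0" by (auto simp: G1_def)
  then show ?thesis by simp
next
  case True
  have "(\<integral>\<^sup>+ y. ennreal (G1 \<rho> (y, s)) \<partial>lborel) = (\<integral>\<^sup>+ y. indicator {s<..<0} y * ennreal (exp (2*\<rho>*(s-y))) * ennreal (1/(\<rho>-s)^2) \<partial>lborel)"
    using AE_lborel_singleton[of s]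
  proof (intro nn_integral_cong_AE, eventually_elim)
    case (elim y)
    then show ?case
      by (auto simp: G1_def split: split_indicator simp flip: ennreal_mult'')
  qed
  also have "\<dots> = (\<integral>\<^sup>+ y. indicator {s<..<0} y * ennreal (exp (2*\<rho>*(s-y))) \<partial>lborel) * ennreal (1/(\<rho>-s)^2)"
    by (rule nn_integral_multc) measurable
  also have "\<dots> = ennreal ((1 - exp (2*\<rho> * s)) / (2*\<rho>)) * ennreal (1/(\<rho>-s)^2)"
    using intB[OF r True] by simp
  also have "\<dots> \<le> ennreal (1 / (2*\<rho>)) * ennreal (1/(\<rho>-s)^2)"
    using r by (intro mult_right_mono ennreal_leI) (auto simp: divide_right_mono)
  finally show ?thesis using True by simp
qed

lemma G2_inner:
  assumes r: "\<rho> > 0"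
  shows "(\<integral>\<^sup>+ s. ennreal (G2 \<rho> (y, s)) \<partial>lborel) \<le> indicator {..<0} y * ennreal (1/(\<rho>-y)^2)"
proof (cases "y < 0")
  case False
  then have "\<And>s. G2 \<rho> (y, s) = 0" by (auto simp: G2_def)
  then show ?thesis by simp
next
  case True
  have "(\<integral>\<^sup>+ s. ennreal (G2 \<rho> (y, s)) \<partial>lborel) = (\<integral>\<^sup>+ s. indicator {y<..<0} s * ennreal (exp (y * (s - y))) * ennreal (1/(\<rho>-y)^2) \<partial>lborel)"
    by (intro nn_integral_cong) (auto simp: G2_def split: split_indicator simp flip: ennreal_mult'')
  also have "\<dots> = (\<integral>\<^sup>+ s. indicator {y<..<0} s * ennreal (exp (y * (s - y))) \<partial>lborel) * ennreal (1/(\<rho>-y)^2)"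
    by (rule nn_integral_multc) measurable
  also have "\<dots> = ennreal ((exp (y * (0 - y)) - exp (y * (y - y))) / y) * ennreal (1/(\<rho>-y)^2)"
    using intC[OF True] by simp
  also have "\<dots> \<le> ennreal 1 * ennreal (1/(\<rho>-y)^2)"
    using intC_le[OF True] by (intro mult_right_mono ennreal_leI) auto
  finally show ?thesis using True by simp
qed

lemma G1_int: assumes r: "\<rho> > 0" shows "integrable (lborel \<Otimes>\<^sub>M lborel) (G1 \<rho>)"
proof -
  have "(\<integral>\<^sup>+ p. ennreal (norm (G1 \<rho> p)) \<partial>(lborel \<Otimes>\<^sub>M lborel)) = (\<integral>\<^sup>+ p. ennreal (G1 \<rho> p) \<partial>(lborel \<Otimes>\<^sub>M lborel))"
    using G1_nn[OF r] by (intro nn_integral_cong) simp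
  also have "\<dots> = (\<integral>\<^sup>+ s. \<integral>\<^sup>+ y. ennreal (G1 \<rho> (y, s)) \<partial>lborel \<partial>lborel)"
    by (rule lborel_pair.nn_integral_snd[symmetric]) measurable
  also have "\<dots> \<le> (\<integral>\<^sup>+ s. ennreal (1 / (2*\<rho>)) * (indicator {..<0} s * ennreal (1/(\<rho>-s)^2)) \<partial>lborel)"
    by (intro nn_integral_mono G1_inner[OF r])
  also have "\<dots> = ennreal (1 / (2*\<rho>)) * ennreal (1/\<rho>)"
    by (subst nn_integral_cmult) (auto simp: intA[OF r])
  also have "\<dots> < \<infinity>" by (simp add: ennreal_mult_less_top)
  finally show ?thesis by (simp add: integrable_iff_bounded)
qed

lemma G2_int: assumes r: "\<rho> > 0" shows "integrable (lborel \<Otimes>\<^sub>M lborel) (G2 \<rho>)"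
proof -
  have "(\<integral>\<^sup>+ p. ennreal (norm (G2 \<rho> p)) \<partial>(lborel \<Otimes>\<^sub>M lborel)) = (\<integral>\<^sup>+ p. ennreal (G2 \<rho> p) \<partial>(lborel \<Otimes>\<^sub>M lborel))"
    using G2_nn[OF r] by (intro nn_integral_cong) simp
  also have "\<dots> = (\<integral>\<^sup>+ y. \<integral>\<^sup>+ s. ennreal (G2 \<rho> (y, s)) \<partial>lborel \<partial>lborel)"
    by (rule lborel.nn_integral_fst[symmetric]) measurable
  also have "\<dots> \<le> (\<integral>\<^sup>+ y. indicator {..<0} y * ennreal (1/(\<rho>-y)^2) \<partial>lborel)"
    by (intro nn_integral_mono G2_inner[OF r])
  also have "\<dots> = ennreal (1/\<rho>)"
    by (rule intA[OF r])
  also have "\<dots> < \<infinity>" by simp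
  finally show ?thesis by (simp add: integrable_iff_bounded)
qed

lemma factor:
  fixes y s :: real assumes y: "y < 0" and s: "s < 0"
  shows "(theta y / y)^2 * \<bar>theta y\<bar> * ((s / theta s)^2 * \<bar>theta s\<bar>) \<le> (min y s)^2"
proof -
  define m where "m = min y s"
  have aym: "\<bar>y\<bar> \<le> \<bar>m\<bar>" and asm: "\<bar>s\<bar> \<le> \<bar>m\<bar>" using y s by (auto simp: m_def min_def)
  have my: "y^2 \<le> m^2" using aym by (simp add: abs_le_square_iff)
  have ms: "s^2 \<le> m^2" using asm by (simp add: abs_le_square_iff)
  define ty where "ty = (theta y / y)^2 * \<bar>theta y\<bar>"
  define ts where "ts = (s / theta s)^2 * \<bar>theta s\<bar>"
  have ty0: "ty \<ge> 0" by (simp add: ty_def)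
  have ts0: "ts \<ge> 0" by (simp add: ts_def)
  have ty1: "ty \<le> 1"
  proof (cases "y < -1")
    case True
    then have "ty = 1 / y^2" by (simp add: ty_def theta_def power_divide)
    moreover have "1 \<le> y^2" using True abs_le_square_iff[of 1 y] by simp
    ultimately show ?thesis by (simp add: divide_le_eq_1)
  next
    case False
    then show ?thesis using y by (simp add: ty_def theta_def)
  qed
  have ty2: "ty \<le> -y" if "y \<ge> -1" using that y by (simp add: ty_def theta_def)
  have ts1: "ts = -s" if "s \<ge> -1" using that s by (simp add: ts_def theta_def)
  have ts2: "ts = s^2" if "s < -1" using that s by (simp add: ts_def theta_def)
  have "ty * ts \<le> m^2"
  proof (cases "s < -1")
    case True
    have "ty * ts \<le> 1 * s^2" using ty1 ts2[OF True] by (intro mult_mono) auto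
    then show ?thesis using ms by simp
  next
    case False
    then have tss: "ts = -s" using ts1 by simp
    show ?thesis
    proof (cases "y < -1")
      case True
      have "ty * ts \<le> 1 * 1" using ty1 tss False ty0 s by (intro mult_mono) auto
      moreover have "1 \<le> y^2" using True abs_le_square_iff[of 1 y] by simp
      ultimately show ?thesis using my by linarith
    next
      case yF: False
      have "ty * ts \<le> \<bar>m\<bar> * \<bar>m\<bar>"
        using ty2 tss aym asm y s yF ty0 by (intro mult_mono) auto
      then show ?thesis by (simp add: power2_eq_square)
    qed
  qed
  then show ?thesis by (simp add: ty_def ts_def m_def mult.assoc)
qed

lemma exp_sq: "(exp (a::real))^2 = exp (2*a)"
  by (metis exp_add mult_2 power2_eq_square)

lemma ptbound:
  fixes \<rho> y s :: real assumes r: "\<rho> > 0" and y: "y < 0" and s: "s < 0"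
  shows "(kernelN \<rho> y s)\<^sup>2 * \<bar>theta y\<bar> * \<bar>theta s\<bar> \<le> G1 \<rho> (y, s) + G2 \<rho> (y, s)"
proof -
  define m where "m = min y s"
  have m: "m < 0" using y s by (simp add: m_def)
  define I where "I = (LBINT u:{..m}. exp (- ((u - \<rho>)\<^sup>2) / 2) / u)"
  define E where "E = exp (- ((m - \<rho>)\<^sup>2) / 2)"
  define ty where "ty = (theta y / y)^2 * \<bar>theta y\<bar>"
  define ts where "ts = (s / theta s)^2 * \<bar>theta s\<bar>"
  have fac: "ty * ts \<le> m^2" using factor[OF y s] by (simp add: ty_def ts_def m_def)
  have tyts0: "0 \<le> ty * ts" by (simp add: ty_def ts_def)
  have Ib: "\<bar>I\<bar> \<le> E / ((-m) * (\<rho> - m))" using Ibound(2)[OF r m] by (simp add: I_def E_def)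
  have I2: "I^2 \<le> (E / ((-m) * (\<rho> - m)))^2"
  proof -
    have "\<bar>I\<bar>^2 \<le> (E / ((-m) * (\<rho> - m)))^2" by (rule power_mono[OF Ib]) simp
    then show ?thesis by simp
  qed
  have E2: "E^2 = exp (- ((m - \<rho>)\<^sup>2))" by (simp add: E_def exp_sq)
  have I2': "I^2 \<le> exp (- ((m - \<rho>)\<^sup>2)) / (m^2 * (\<rho> - m)^2)"
    using I2 by (simp add: E2 power_divide power_mult_distrib)
  have K2: "(kernelN \<rho> y s)\<^sup>2 * \<bar>theta y\<bar> * \<bar>theta s\<bar> = exp (-2*\<rho>*y + s^2) * (ty * ts) * I^2"
  proof -
    have "(kernelN \<rho> y s)\<^sup>2 * \<bar>theta y\<bar> * \<bar>theta s\<bar> = ((exp (- \<rho> * y))^2 * (exp (s\<^sup>2 / 2))^2) * (ty * ts) * I^2"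
    proof -
      have gen: "\<And>a b c d e p q::real. (a*b*c*d*e)^2 * p * q = (a^2*d^2) * ((b^2*p)*(c^2*q)) * e^2"
        by (simp add: power_mult_distrib mult_ac)
      show ?thesis unfolding kernelN_def ty_def ts_def I_def m_def by (rule gen)
    qed
    also have "(exp (- \<rho> * y))^2 * (exp (s\<^sup>2 / 2))^2 = exp (-2*\<rho>*y + s^2)"
      by (simp add: exp_sq mult_exp_exp)
    finally show ?thesis .
  qed
  also have "\<dots> \<le> exp (-2*\<rho>*y + s^2) * m^2 * (exp (- ((m - \<rho>)\<^sup>2)) / (m^2 * (\<rho> - m)^2))"
  proof -
    have "(ty * ts) * I^2 \<le> m^2 * (exp (- ((m - \<rho>)\<^sup>2)) / (m^2 * (\<rho> - m)^2))"
      by (rule mult_mono[OF fac I2']) (auto simp: tyts0)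
    from mult_left_mono[OF this exp_ge_zero[of "-2*\<rho>*y + s^2"]] show ?thesis
      by (simp only: mult.assoc)
  qed
  also have "\<dots> = exp (-2*\<rho>*y + s^2 - (m - \<rho>)\<^sup>2) / (\<rho> - m)^2"
  proof -
    have gen2: "\<And>a c A B::real. c \<noteq> 0 \<Longrightarrow> B \<noteq> 0 \<Longrightarrow> a * c * (A / (c * B)) = a * A / B"
      by (simp add: field_simps)
    have "exp (-2*\<rho>*y + s^2) * m^2 * (exp (- ((m - \<rho>)\<^sup>2)) / (m^2 * (\<rho> - m)^2))
        = exp (-2*\<rho>*y + s^2) * exp (- ((m - \<rho>)\<^sup>2)) / (\<rho> - m)^2"
      by (rule gen2) (use m r in auto)
    also have "exp (-2*\<rho>*y + s^2) * exp (- ((m - \<rho>)\<^sup>2)) = exp (-2*\<rho>*y + s^2 - (m - \<rho>)\<^sup>2)"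
      by (simp add: mult_exp_exp)
    finally show ?thesis .
  qed
  also have "\<dots> \<le> G1 \<rho> (y, s) + G2 \<rho> (y, s)"
  proof (cases "s \<le> y")
    case True
    then have mm: "m = s" by (simp add: m_def)
    have "-2*\<rho>*y + s^2 - (m - \<rho>)\<^sup>2 \<le> 2*\<rho>*(s - y)"
      unfolding mm by (simp add: power2_eq_square algebra_simps)
    then have "exp (-2*\<rho>*y + s^2 - (m - \<rho>)\<^sup>2) / (\<rho> - m)^2 \<le> exp (2*\<rho>*(s - y)) / (\<rho> - s)^2"
      unfolding mm by (intro divide_right_mono) auto
    also have "\<dots> = G1 \<rho> (y, s)" using True y by (simp add: G1_def)
    also have "\<dots> \<le> G1 \<rho> (y, s) + G2 \<rho> (y, s)" using G2_nn[OF r] by simp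
    finally show ?thesis .
  next
    case False
    then have mm: "m = y" by (simp add: m_def)
    have neg: "(s - y) * s < 0" using False s by (intro mult_pos_neg) auto
    have id: "s^2 - y^2 - y * (s - y) = (s - y) * s" by (simp add: power2_eq_square algebra_simps)
    have "-2*\<rho>*y + s^2 - (m - \<rho>)\<^sup>2 \<le> y * (s - y)"
    proof -
      have "-2*\<rho>*y + s^2 - (y - \<rho>)\<^sup>2 = s^2 - y^2 - \<rho>^2" by (simp add: power2_eq_square algebra_simps)
      then show ?thesis unfolding mm using neg id zero_le_power2[of \<rho>] by linarith
    qed
    then have "exp (-2*\<rho>*y + s^2 - (m - \<rho>)\<^sup>2) / (\<rho> - m)^2 \<le> exp (y * (s - y)) / (\<rho> - y)^2"
      unfolding mm by (intro divide_right_mono) auto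
    also have "\<dots> = G2 \<rho> (y, s)" using False s by (simp add: G2_def)
    also have "\<dots> \<le> G1 \<rho> (y, s) + G2 \<rho> (y, s)" using G1_nn[OF r] by simp
    finally show ?thesis .
  qed
  finally show ?thesis .
qed

definition Ifn :: "real \<Rightarrow> real \<Rightarrow> real" where
  "Ifn \<rho> m = (LBINT u:{..m}. exp (- ((u - \<rho>)\<^sup>2) / 2) / u)"

lemma Ifn_meas[measurable]: "Ifn \<rho> \<in> borel_measurable borel"
proof -
  have "(\<lambda>m. \<integral>u. indicator {..m} u *\<^sub>R (exp (- ((u - \<rho>)\<^sup>2) / 2) / u) \<partial>lborel) \<in> borel_measurable lborel"
  proof (rule lborel.borel_measurable_lebesgue_integral)
    have "(\<lambda>p::real\<times>real. (if snd p \<le> fst p then 1 else 0) * (exp (- ((snd p - \<rho>)\<^sup>2) / 2) / snd p)) \<in> borel_measurable (lborel \<Otimes>\<^sub>M lborel)"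
      by measurable
    then show "(\<lambda>(m, u). indicator {..m} u *\<^sub>R (exp (- ((u - \<rho>)\<^sup>2) / 2) / u)) \<in> borel_measurable (lborel \<Otimes>\<^sub>M lborel)"
      by (rule measurable_cong[THEN iffD1, rotated]) (auto split: split_indicator)
  qed
  then show ?thesis
    unfolding Ifn_def[abs_def] set_lebesgue_integral_def by simp
qed

lemma theta_meas[measurable]: "theta \<in> borel_measurable borel"
  unfolding theta_def[abs_def] by measurable

lemma kernel_meas: "(\<lambda>(y, s). kernelN \<rho> y s) \<in> borel_measurable (lborel \<Otimes>\<^sub>M lborel)"
proof -
  have e: "(\<lambda>(y, s). kernelN \<rho> y s) = (\<lambda>p. exp (- \<rho> * fst p) * (theta (fst p) / fst p) * (snd p / theta (snd p)) * exp ((snd p)\<^sup>2 / 2) * Ifn \<rho> (min (fst p) (snd p)))"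
    by (auto simp: kernelN_def Ifn_def fun_eq_iff)
  show ?thesis unfolding e by measurable
qed

lemma kernel_zero: "y = 0 \<or> s = 0 \<Longrightarrow> kernelN \<rho> y s = 0"
  by (auto simp: kernelN_def theta_def)

theorem theorem5p7:
  fixes \<rho> :: real
  assumes "\<rho> > 0"
  shows "set_borel_measurable (lborel \<Otimes>\<^sub>M lborel) ({..0} \<times> {..0})
           (\<lambda>(y, s). kernelN \<rho> y s)
       \<and> set_integrable (lborel \<Otimes>\<^sub>M lborel) ({..0} \<times> {..0})
           (\<lambda>(y, s). (kernelN \<rho> y s)\<^sup>2 * \<bar>theta y\<bar> * \<bar>theta s\<bar>)"
proof
  note km[measurable] = kernel_meas[of \<rho>]
  show "set_borel_measurable (lborel \<Otimes>\<^sub>M lborel) ({..0} \<times> {..0}) (\<lambda>(y, s). kernelN \<rho> y s)"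
    unfolding set_borel_measurable_def by measurable
  define H where "H = (\<lambda>p. indicator ({..0::real} \<times> {..0::real}) p *\<^sub>R (\<lambda>(y, s). (kernelN \<rho> y s)\<^sup>2 * \<bar>theta y\<bar> * \<bar>theta s\<bar>) p)"
  have Hm: "H \<in> borel_measurable (lborel \<Otimes>\<^sub>M lborel)"
    unfolding H_def by measurable
  have Gi: "integrable (lborel \<Otimes>\<^sub>M lborel) (\<lambda>p. G1 \<rho> p + G2 \<rho> p)"
    using G1_int[OF assms] G2_int[OF assms] by (rule Bochner_Integration.integrable_add)
  have bound: "norm (H p) \<le> norm (G1 \<rho> p + G2 \<rho> p)" for p
  proof -
    obtain y s where p: "p = (y, s)" by (cases p)
    have G0: "0 \<le> G1 \<rho> p + G2 \<rho> p" using G1_nn[OF assms] G2_nn[OF assms] by (simp add: add_nonneg_nonneg)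
    show ?thesis
    proof (cases "y < 0 \<and> s < 0")
      case True
      then have "H p = (kernelN \<rho> y s)\<^sup>2 * \<bar>theta y\<bar> * \<bar>theta s\<bar>" by (simp add: H_def p)
      moreover have "0 \<le> (kernelN \<rho> y s)\<^sup>2 * \<bar>theta y\<bar> * \<bar>theta s\<bar>" by simp
      ultimately show ?thesis using ptbound[OF assms, of y s] True G0 by (simp add: p)
    next
      case False
      then have "H p = 0"
        by (cases "y \<le> 0 \<and> s \<le> 0") (auto simp: H_def p kernel_zero)
      then show ?thesis by simp
    qed
  qed
  have "integrable (lborel \<Otimes>\<^sub>M lborel) H"
    by (rule Bochner_Integration.integrable_bound[OF Gi Hm]) (use bound in auto)
  then show "set_integrable (lborel \<Otimes>\<^sub>M lborel) ({..0} \<times> {..0})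
           (\<lambda>(y, s). (kernelN \<rho> y s)\<^sup>2 * \<bar>theta y\<bar> * \<bar>theta s\<bar>)"
    by (simp add: set_integrable_def H_def)
qed

end
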